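(* Let $(G,\rho)$ be a ribbon graph with a vertex $v$. Let $e_1\neq e_2$ be two edges incident to $v$ lying in the same $v$-component, and let $w_1,w_2$ be their other endpoints respectively. Then there exists a spanning tree $T$ of $G$ such that (i) $e_1\in T$, (ii) $e_2\notin T$, and (iii) the path in $T$ from $w_2$ to $v$ passes through $w_1$.
   Context: Graphs are finite, connected, loopless, possibly with multiple edges. A ribbon graph assigns to each vertex a cyclic order on its incident edges. For a vertex $v$, a $v$-component of $(G,\rho)$ is the full ribbon subgraph induced on the vertex set of a connected component of $G\setminus v$ together with $v$. *)

theory Defs
  imports Main
begin

definition multigraph :: "'v set \<Rightarrow> 'e set \<Rightarrow> ('e \<Rightarrow> 'v set) \<Rightarrow> bool" where
  "multigraph V E ends \<longleftrightarrow> finite V \<and> finite E \<and>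
     (\<forall>e\<in>E. ends e \<subseteq> V \<and> card (ends e) = 2)"

definition walk :: "('e \<Rightarrow> 'v set) \<Rightarrow> 'e set \<Rightarrow> 'v list \<Rightarrow> 'e list \<Rightarrow> bool" where
  "walk ends F vs es \<longleftrightarrow> vs \<noteq> [] \<and> length vs = Suc (length es) \<and> set es \<subseteq> F \<and>
     (\<forall>i<length es. ends (es ! i) = {vs ! i, vs ! Suc i})"

definition path :: "('e \<Rightarrow> 'v set) \<Rightarrow> 'e set \<Rightarrow> 'v list \<Rightarrow> 'e list \<Rightarrow> bool" where
  "path ends F vs es \<longleftrightarrow> walk ends F vs es \<and> distinct vs"

definition cycle :: "('e \<Rightarrow> 'v set) \<Rightarrow> 'e set \<Rightarrow> 'v list \<Rightarrow> 'e list \<Rightarrow> bool" where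
  "cycle ends F vs es \<longleftrightarrow> walk ends F vs es \<and> es \<noteq> [] \<and> distinct es \<and>
     hd vs = last vs \<and> distinct (tl vs)"

definition connected_on :: "'v set \<Rightarrow> 'e set \<Rightarrow> ('e \<Rightarrow> 'v set) \<Rightarrow> bool" where
  "connected_on V F ends \<longleftrightarrow> V \<noteq> {} \<and>
     (\<forall>x\<in>V. \<forall>y\<in>V. \<exists>vs es. walk ends F vs es \<and> set vs \<subseteq> V \<and> hd vs = x \<and> last vs = y)"

definition acyclic_on :: "'e set \<Rightarrow> ('e \<Rightarrow> 'v set) \<Rightarrow> bool" where
  "acyclic_on F ends \<longleftrightarrow> \<not> (\<exists>vs es. cycle ends F vs es)"

definition spanning_tree :: "'v set \<Rightarrow> 'e set \<Rightarrow> ('e \<Rightarrow> 'v set) \<Rightarrow> 'e set \<Rightarrow> bool" where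
  "spanning_tree V E ends T \<longleftrightarrow> T \<subseteq> E \<and> connected_on V T ends \<and> acyclic_on T ends"

definition incident_edges :: "'e set \<Rightarrow> ('e \<Rightarrow> 'v set) \<Rightarrow> 'v \<Rightarrow> 'e set" where
  "incident_edges E ends u = {e\<in>E. u \<in> ends e}"

text \<open>A ribbon graph: a connected loopless multigraph together with, at each vertex u,
  a cyclic order on its incident edges, given as a cyclic permutation rho u of them.\<close>
definition ribbon_graph :: "'v set \<Rightarrow> 'e set \<Rightarrow> ('e \<Rightarrow> 'v set) \<Rightarrow> ('v \<Rightarrow> 'e \<Rightarrow> 'e) \<Rightarrow> bool" where
  "ribbon_graph V E ends rho \<longleftrightarrow> multigraph V E ends \<and> connected_on V E ends \<and>
     (\<forall>u\<in>V. bij_betw (rho u) (incident_edges E ends u) (incident_edges E ends u) \<and>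
        (\<forall>e\<in>incident_edges E ends u. \<forall>e'\<in>incident_edges E ends u.
           \<exists>n. (rho u ^^ n) e = e'))"

text \<open>Vertex sets of the v-components: for each connected component C of G \<setminus> v,
  the v-component is the full subgraph induced on C \<union> {v}.\<close>
definition delete_vertex_edges :: "'e set \<Rightarrow> ('e \<Rightarrow> 'v set) \<Rightarrow> 'v \<Rightarrow> 'e set" where
  "delete_vertex_edges E ends v = {e\<in>E. v \<notin> ends e}"

definition component_of :: "'v set \<Rightarrow> 'e set \<Rightarrow> ('e \<Rightarrow> 'v set) \<Rightarrow> 'v \<Rightarrow> 'v set" where
  "component_of V F ends x = {y\<in>V. \<exists>vs es. walk ends F vs es \<and> set vs \<subseteq> V \<and> hd vs = x \<and> last vs = y}"

definition v_component_vertex_sets :: "'v set \<Rightarrow> 'e set \<Rightarrow> ('e \<Rightarrow> 'v set) \<Rightarrow> 'v \<Rightarrow> 'v set set" where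
  "v_component_vertex_sets V E ends v =
     {component_of (V - {v}) (delete_vertex_edges E ends v) ends x \<union> {v} | x. x \<in> V - {v}}"

definition induced_edges :: "'e set \<Rightarrow> ('e \<Rightarrow> 'v set) \<Rightarrow> 'v set \<Rightarrow> 'e set" where
  "induced_edges E ends U = {e\<in>E. ends e \<subseteq> U}"

definition same_v_component :: "'v set \<Rightarrow> 'e set \<Rightarrow> ('e \<Rightarrow> 'v set) \<Rightarrow> 'v \<Rightarrow> 'e \<Rightarrow> 'e \<Rightarrow> bool" where
  "same_v_component V E ends v e1 e2 \<longleftrightarrow>
     (\<exists>U\<in>v_component_vertex_sets V E ends v. e1 \<in> induced_edges E ends U \<and> e2 \<in> induced_edges E ends U)"

end

theory Submission
  imports Defs
begin

definition conn :: "('e \<Rightarrow> 'v set) \<Rightarrow> 'e set \<Rightarrow> 'v \<Rightarrow> 'v \<Rightarrow> bool" where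
  "conn ends F x y \<longleftrightarrow> (\<exists>vs es. walk ends F vs es \<and> hd vs = x \<and> last vs = y)"

lemma walk_Nil: "walk ends F vs [] \<longleftrightarrow> (\<exists>x. vs = [x])"
  by (auto simp: walk_def length_Suc_conv)

lemma walk_nonempty: "walk ends F vs es \<Longrightarrow> vs \<noteq> []"
  by (simp add: walk_def)

lemma walk_Cons: "walk ends F (x # vs) (g # es) \<longleftrightarrow> g \<in> F \<and> ends g = {x, hd vs} \<and> walk ends F vs es"
proof
  assume H: "walk ends F (x # vs) (g # es)"
  hence L: "length vs = Suc (length es)" and A: "\<forall>i<Suc (length es). ends ((g#es) ! i) = {(x#vs) ! i, (x#vs) ! Suc i}"
    and S: "set (g#es) \<subseteq> F" by (auto simp: walk_def)
  hence ne: "vs \<noteq> []" by auto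
  have "ends g = {x, hd vs}" using A[rule_format, of 0] ne by (simp add: hd_conv_nth)
  moreover have "\<forall>i<length es. ends (es!i) = {vs!i, vs!Suc i}"
  proof (intro allI impI)
    fix i assume "i < length es" then show "ends (es!i) = {vs!i, vs!Suc i}" using A[rule_format, of "Suc i"] by simp
  qed
  ultimately show "g \<in> F \<and> ends g = {x, hd vs} \<and> walk ends F vs es" using L S ne by (auto simp: walk_def)
next
  assume H: "g \<in> F \<and> ends g = {x, hd vs} \<and> walk ends F vs es"
  hence ne: "vs \<noteq> []" by (simp add: walk_def)
  show "walk ends F (x # vs) (g # es)" unfolding walk_def
  proof (intro conjI allI impI)
    fix i assume "i < length (g # es)"
    then show "ends ((g # es) ! i) = {(x # vs) ! i, (x # vs) ! Suc i}"
      using H ne by (cases i) (auto simp: walk_def hd_conv_nth)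
  qed (use H in \<open>auto simp: walk_def\<close>)
qed

lemma walk_induct[consumes 1, case_names Nil Cons]:
  assumes "walk ends F vs es"
    and "\<And>x. P [x] []"
    and "\<And>x g vs es. g \<in> F \<Longrightarrow> ends g = {x, hd vs} \<Longrightarrow> walk ends F vs es \<Longrightarrow> P vs es \<Longrightarrow> P (x#vs) (g#es)"
  shows "P vs es"
  using assms(1)
proof (induction es arbitrary: vs)
  case Nil then show ?case using assms(2) by (auto simp: walk_Nil)
next
  case (Cons g es)
  then obtain x vs' where "vs = x # vs'" by (cases vs) (auto simp: walk_def)
  then show ?case using Cons assms(3) by (auto simp: walk_Cons)
qed

lemma walk_append:
  assumes "walk ends F vs1 es1" "walk ends F vs2 es2" "last vs1 = hd vs2"
  shows "walk ends F (vs1 @ tl vs2) (es1 @ es2)"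
  using assms
proof (induction rule: walk_induct)
  case (Nil x)
  then show ?case using walk_nonempty[OF Nil(1)] by (cases vs2) auto
next
  case (Cons x g vs es)
  have ne: "vs \<noteq> []" using walk_nonempty[OF Cons(3)] .
  then have "walk ends F (vs @ tl vs2) (es @ es2)" using Cons by auto
  then show ?case using Cons ne by (auto simp: walk_Cons)
qed

lemma walk_rev: "walk ends F vs es \<Longrightarrow> walk ends F (rev vs) (rev es)"
proof (induction rule: walk_induct)
  case (Nil x)
  then show ?case by (simp add: walk_Nil)
next
  case (Cons x g vs es)
  have ne: "vs \<noteq> []" using walk_nonempty[OF Cons(3)] .
  have w: "walk ends F [hd vs, x] [g]" using Cons by (auto simp: walk_Cons walk_Nil insert_commute)
  have "walk ends F (rev vs @ tl [hd vs, x]) (rev es @ [g])"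
    by (rule walk_append[OF Cons(4) w]) (simp add: ne last_rev)
  then show ?case by simp
qed

lemma walk_subset: "walk ends F vs es \<Longrightarrow> set es \<subseteq> F' \<Longrightarrow> walk ends F' vs es"
  by (auto simp: walk_def)

lemma walk_drop: "walk ends F vs es \<Longrightarrow> i \<le> length es \<Longrightarrow> walk ends F (drop i vs) (drop i es)"
  by (auto simp: walk_def dest: in_set_dropD)

lemma walk_edge_ends: "walk ends F vs es \<Longrightarrow> g \<in> set es \<Longrightarrow> ends g \<subseteq> set vs"
proof (induction rule: walk_induct)
  case (Nil x)
  then show ?case by simp
next
  case (Cons x g' vs es)
  have ne: "vs \<noteq> []" using walk_nonempty[OF Cons(3)] .
  then show ?case using Cons by auto
qed

lemma path_distinct_edges: "walk ends F vs es \<Longrightarrow> distinct vs \<Longrightarrow> distinct es"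
proof (induction rule: walk_induct)
  case (Nil x)
  then show ?case by simp
next
  case (Cons x g vs es)
  have "g \<notin> set es" using walk_edge_ends[OF Cons(3)] Cons(2,5) by auto
  then show ?case using Cons by auto
qed

lemma walk_to_path: "walk ends F vs es \<Longrightarrow> \<exists>pvs pes. path ends F pvs pes \<and> hd pvs = hd vs \<and> last pvs = last vs"
proof (induction rule: walk_induct)
  case (Nil x)
  then show ?case by (rule_tac x="[x]" in exI, rule_tac x="[]" in exI) (auto simp: path_def walk_Nil)
next
  case (Cons x g vs es)
  have ne: "vs \<noteq> []" using walk_nonempty[OF Cons(3)] .
  obtain pvs pes where P: "path ends F pvs pes" "hd pvs = hd vs" "last pvs = last vs" using Cons(4) by blast
  have pne: "pvs \<noteq> []" using P(1) by (auto simp: path_def walk_def)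
  show ?case
  proof (cases "x \<in> set pvs")
    case False
    have "path ends F (x # pvs) (g # pes)" using P False Cons(1,2) by (auto simp: path_def walk_Cons)
    then show ?thesis using P pne ne by (intro exI[of _ "x#pvs"] exI[of _ "g#pes"]) auto
  next
    case True
    then obtain i where i: "i < length pvs" "pvs ! i = x" by (auto simp: in_set_conv_nth)
    have lp: "length pvs = Suc (length pes)" using P(1) by (simp add: path_def walk_def)
    have "walk ends F (drop i pvs) (drop i pes)" using P(1) i lp by (intro walk_drop) (auto simp: path_def)
    then have "path ends F (drop i pvs) (drop i pes)" using P(1) by (auto simp: path_def)
    moreover have "hd (drop i pvs) = x" using i by (simp add: hd_drop_conv_nth)
    moreover have "last (drop i pvs) = last pvs" using i by simp
    ultimately show ?thesis using P ne by (intro exI[of _ "drop i pvs"] exI[of _ "drop i pes"]) auto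
  qed
qed

lemma conn_refl: "conn ends F x x"
  unfolding conn_def by (rule exI[of _ "[x]"], rule exI[of _ "[]"]) (simp add: walk_Nil)

lemma conn_sym: "conn ends F x y \<Longrightarrow> conn ends F y x"
  unfolding conn_def using walk_rev walk_nonempty by (metis hd_rev last_rev)

lemma conn_trans: "conn ends F x y \<Longrightarrow> conn ends F y z \<Longrightarrow> conn ends F x z"
proof -
  assume "conn ends F x y" "conn ends F y z"
  then obtain vs1 es1 vs2 es2 where A: "walk ends F vs1 es1" "hd vs1 = x" "last vs1 = y"
    "walk ends F vs2 es2" "hd vs2 = y" "last vs2 = z" by (auto simp: conn_def)
  have w: "walk ends F (vs1 @ tl vs2) (es1 @ es2)" using walk_append A by metis
  have n1: "vs1 \<noteq> []" "vs2 \<noteq> []" using A walk_nonempty by metis+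
  have "hd (vs1 @ tl vs2) = x" using n1 A by simp
  moreover have "last (vs1 @ tl vs2) = z"
  proof (cases "tl vs2 = []")
    case True
    then have "vs2 = [hd vs2]" using n1 by (cases vs2) auto
    then show ?thesis using True A by (metis append.right_neutral last.simps)
  next
    case False
    then show ?thesis using A n1 by (cases vs2) auto
  qed
  ultimately show ?thesis using w by (auto simp: conn_def)
qed

lemma conn_mono: "conn ends F x y \<Longrightarrow> F \<subseteq> F' \<Longrightarrow> conn ends F' x y"
  unfolding conn_def by (metis walk_def walk_subset subset_trans)

lemma conn_edge: "g \<in> F \<Longrightarrow> ends g = {x, y} \<Longrightarrow> conn ends F x y"
  unfolding conn_def by (rule exI[of _ "[x,y]"], rule exI[of _ "[g]"]) (simp add: walk_Cons walk_Nil)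

lemma conn_insert_split:
  assumes "ends e = {a, b}" "conn ends (insert e F) x y"
  shows "conn ends F x y \<or> (conn ends F x a \<and> conn ends F b y) \<or> (conn ends F x b \<and> conn ends F a y)"
proof -
  obtain vs es where W: "walk ends (insert e F) vs es" "hd vs = x" "last vs = y"
    using assms(2) by (auto simp: conn_def)
  have "conn ends F (hd vs) (last vs) \<or> (conn ends F (hd vs) a \<and> conn ends F b (last vs)) \<or>
        (conn ends F (hd vs) b \<and> conn ends F a (last vs))"
    using W(1)
  proof (induction rule: walk_induct)
    case (Nil x)
    then show ?case using conn_refl by (metis last.simps list.sel(1))
  next
    case (Cons x g vs es)
    have ne: "vs \<noteq> []" using walk_nonempty[OF Cons(3)] .
    have l: "last (x # vs) = last vs" using ne by simp
    show ?case
    proof (cases "g = e")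
      case True
      then have "(x = a \<and> hd vs = b) \<or> (x = b \<and> hd vs = a)" using Cons(2) assms(1) by (auto simp: doubleton_eq_iff)
      then show ?thesis using Cons(4) l conn_refl conn_trans conn_sym by (smt (verit) list.sel(1))
    next
      case False
      then have "conn ends F x (hd vs)" using Cons(1,2) conn_edge by fastforce
      then show ?thesis using Cons(4) l conn_trans by (metis list.sel(1))
    qed
  qed
  then show ?thesis using W by simp
qed

lemma acyclic_imp:
  assumes "acyclic_on F ends" "e \<in> F" "ends e = {a, b}"
  shows "\<not> conn ends (F - {e}) a b"
proof
  assume "conn ends (F - {e}) a b"
  then obtain vs es where "walk ends (F - {e}) vs es" "hd vs = a" "last vs = b" by (auto simp: conn_def)
  then obtain pvs pes where P: "path ends (F - {e}) pvs pes" "hd pvs = a" "last pvs = b"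
    using walk_to_path by metis
  have pw: "walk ends (F - {e}) pvs pes" and pd: "distinct pvs" using P(1) by (auto simp: path_def)
  have ne: "pvs \<noteq> []" using walk_nonempty[OF pw] .
  have w1: "walk ends F pvs pes" using pw by (auto simp: walk_def)
  have w2: "walk ends F [b, a] [e]" using assms by (auto simp: walk_Cons walk_Nil insert_commute)
  have "walk ends F (pvs @ tl [b, a]) (pes @ [e])" using walk_append[OF w1 w2] P by simp
  then have W: "walk ends F (pvs @ [a]) (pes @ [e])" by simp
  have "distinct pes" using path_distinct_edges[OF pw pd] .
  moreover have "e \<notin> set pes" using pw by (auto simp: walk_def)
  ultimately have D: "distinct (pes @ [e])" by simp
  obtain r where r: "pvs = a # r" using ne P(2) by (cases pvs) auto
  have "distinct (tl (pvs @ [a]))" using pd r by auto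
  then have "cycle ends F (pvs @ [a]) (pes @ [e])" using W D r by (auto simp: cycle_def)
  then show False using assms(1) by (auto simp: acyclic_on_def)
qed

lemma acyclic_intro:
  assumes "\<And>e a b. e \<in> F \<Longrightarrow> ends e = {a, b} \<Longrightarrow> \<not> conn ends (F - {e}) a b"
  shows "acyclic_on F ends"
  unfolding acyclic_on_def
proof
  assume "\<exists>vs es. cycle ends F vs es"
  then obtain vs es where C: "cycle ends F vs es" by blast
  then obtain g es' where es: "es = g # es'" by (cases es) (auto simp: cycle_def)
  obtain x vs' where vs: "vs = x # vs'" using C by (cases vs) (auto simp: cycle_def walk_def)
  have W: "walk ends F (x # vs') (g # es')" using C vs es by (simp add: cycle_def)
  then have g: "g \<in> F" "ends g = {x, hd vs'}" and W': "walk ends F vs' es'" by (auto simp: walk_Cons)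
  have ne: "vs' \<noteq> []" using walk_nonempty[OF W'] .
  have "g \<notin> set es'" using C es by (simp add: cycle_def)
  then have "walk ends (F - {g}) vs' es'" using W' by (auto simp: walk_def)
  moreover have "last vs' = x" using C vs ne by (simp add: cycle_def)
  ultimately have "conn ends (F - {g}) (hd vs') x" by (auto simp: conn_def)
  then have "conn ends (F - {g}) x (hd vs')" by (rule conn_sym)
  then show False using assms[OF g] by simp
qed

lemma acyclic_empty: "acyclic_on {} ends"
  by (auto simp: acyclic_on_def cycle_def walk_def)

lemma acyclic_insert:
  assumes "acyclic_on T ends" "ends e = {a, b}" "\<not> conn ends T a b"
  shows "acyclic_on (insert e T) ends"
proof (rule acyclic_intro)
  have eT: "e \<notin> T" using assms conn_edge by metis
  fix f c d assume f: "f \<in> insert e T" "ends f = {c, d}"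
  show "\<not> conn ends (insert e T - {f}) c d"
  proof
    assume C: "conn ends (insert e T - {f}) c d"
    show False
    proof (cases "f = e")
      case True
      then have "conn ends T c d" using C eT by simp
      then have "conn ends T a b" using f True assms(2) conn_sym by (metis doubleton_eq_iff)
      then show False using assms(3) by simp
    next
      case False
      then have fT: "f \<in> T" using f by simp
      have eq: "insert e T - {f} = insert e (T - {f})" using False by auto
      have n: "\<not> conn ends (T - {f}) c d" using acyclic_imp[OF assms(1) fT f(2)] .
      have cdT: "conn ends T c d" using conn_edge fT f(2) by metis
      have sub: "T - {f} \<subseteq> T" by auto
      from conn_insert_split[OF assms(2) C[unfolded eq]] n
      consider "conn ends (T - {f}) c a \<and> conn ends (T - {f}) b d" | "conn ends (T - {f}) c b \<and> conn ends (T - {f}) a d"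
        by blast
      then show False
      proof cases
        case 1
        then have "conn ends T c a" "conn ends T b d" using conn_mono sub by metis+
        then have "conn ends T a b" using cdT conn_sym conn_trans by metis
        then show False using assms(3) by simp
      next
        case 2
        then have "conn ends T c b" "conn ends T a d" using conn_mono sub by metis+
        then have "conn ends T a b" using cdT conn_sym conn_trans by metis
        then show False using assms(3) by simp
      qed
    qed
  qed
qed

lemma extend_acyclic:
  assumes "finite B" "acyclic_on A ends" "A \<subseteq> B"
  shows "\<exists>T. acyclic_on T ends \<and> A \<subseteq> T \<and> T \<subseteq> B \<and> (\<forall>g\<in>B. \<forall>p q. ends g = {p, q} \<longrightarrow> conn ends T p q)"
proof -
  let ?P = "\<lambda>T. acyclic_on T ends \<and> A \<subseteq> T \<and> T \<subseteq> B"
  have "\<forall>T. ?P T \<longrightarrow> card T < Suc (card B)" using assms(1) by (simp add: card_mono less_Suc_eq_le)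
  then obtain T where T: "?P T" "\<forall>T'. ?P T' \<longrightarrow> card T' \<le> card T"
    using ex_has_greatest_nat[of ?P A card "Suc (card B)"] assms by blast
  have "\<forall>g\<in>B. \<forall>p q. ends g = {p, q} \<longrightarrow> conn ends T p q"
  proof (intro ballI allI impI)
    fix g p q assume g: "g \<in> B" "ends g = {p, q}"
    show "conn ends T p q"
    proof (rule ccontr)
      assume nc: "\<not> conn ends T p q"
      then have "g \<notin> T" using conn_edge g by metis
      have "?P (insert g T)" using acyclic_insert[OF _ g(2) nc] T g by auto
      then have "card (insert g T) \<le> card T" using T by blast
      moreover have "finite T" using T assms(1) finite_subset by blast
      ultimately show False using \<open>g \<notin> T\<close> by simp
    qed
  qed
  then show ?thesis using T by blast
qed

lemma conn_lift:
  assumes "walk ends B vs es" "\<forall>g\<in>B. \<forall>p q. ends g = {p, q} \<longrightarrow> conn ends T p q"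
  shows "conn ends T (hd vs) (last vs)"
  using assms(1)
proof (induction rule: walk_induct)
  case (Nil x)
  then show ?case by (simp add: conn_refl)
next
  case (Cons x g vs es)
  have ne: "vs \<noteq> []" using walk_nonempty[OF Cons(3)] .
  have "conn ends T x (hd vs)" using assms(2) Cons(1,2) by blast
  then show ?case using Cons(4) ne conn_trans by fastforce
qed

lemma walk_in_V:
  assumes "multigraph V E ends" "F \<subseteq> E" "walk ends F vs es" "hd vs \<in> V"
  shows "set vs \<subseteq> V"
  using assms(3,4)
proof (induction rule: walk_induct)
  case (Nil x)
  then show ?case by simp
next
  case (Cons x g vs es)
  have "hd vs \<in> V" using Cons(1,2) assms(1,2) by (auto simp: multigraph_def)
  then show ?case using Cons by auto
qed

lemma walk_stuck:
  assumes "walk ends F vs es" "\<forall>g\<in>F. hd vs \<notin> ends g"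
  shows "last vs = hd vs"
  using assms
proof (induction rule: walk_induct)
  case (Nil x)
  then show ?case by simp
next
  case (Cons x g vs es)
  then show ?case by auto
qed

theorem lemma4p2:
  fixes V :: "'v set" and E :: "'e set" and ends :: "'e \<Rightarrow> 'v set"
    and rho :: "'v \<Rightarrow> 'e \<Rightarrow> 'e" and v w1 w2 :: 'v and e1 e2 :: 'e
  assumes "ribbon_graph V E ends rho"
    and "v \<in> V"
    and "e1 \<in> E" and "e2 \<in> E" and "e1 \<noteq> e2"
    and "ends e1 = {v, w1}" and "ends e2 = {v, w2}"
    and "same_v_component V E ends v e1 e2"
  shows "\<exists>T. spanning_tree V E ends T \<and> e1 \<in> T \<and> e2 \<notin> T \<and>
           (\<forall>vs es. path ends T vs es \<and> hd vs = w2 \<and> last vs = v \<longrightarrow> w1 \<in> set vs)"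
proof -
  have MG: "multigraph V E ends" and CE: "connected_on V E ends" using assms(1) by (auto simp: ribbon_graph_def)
  have fE: "finite E" using MG by (simp add: multigraph_def)
  have "card {v, w1} = 2" using MG assms(3,6) by (auto simp: multigraph_def)
  then have vw1: "v \<noteq> w1" by auto
  define D where "D = delete_vertex_edges E ends v"
  have DE: "D \<subseteq> E" and vD: "\<forall>g\<in>D. v \<notin> ends g" by (auto simp: D_def delete_vertex_edges_def)
  have e1D: "e1 \<notin> D" "e2 \<notin> D" using vD assms(6,7) by auto
  obtain x U where U: "U = component_of (V - {v}) D ends x \<union> {v}" "x \<in> V - {v}"
    "ends e1 \<subseteq> U" "ends e2 \<subseteq> U"
    using assms(8) by (auto simp: same_v_component_def v_component_vertex_sets_def induced_edges_def D_def)
  have "w1 \<in> component_of (V - {v}) D ends x" using U vw1 assms(6) by auto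
  then have c1: "conn ends D x w1" by (auto simp: component_of_def conn_def)
  have "w2 \<in> component_of (V - {v}) D ends x \<or> w2 = v" using U assms(7) by auto
  then have c2: "conn ends D x w2 \<or> w2 = v" by (auto simp: component_of_def conn_def)
  have "card {v, w2} = 2" using MG assms(4,7) by (auto simp: multigraph_def)
  then have "w2 \<noteq> v" by auto
  then have c2: "conn ends D x w2" using c2 by simp
  have cD: "conn ends D w2 w1" using conn_trans[OF conn_sym[OF c2] c1] .
  obtain T1 where T1: "acyclic_on T1 ends" "T1 \<subseteq> D" "\<forall>g\<in>D. \<forall>p q. ends g = {p, q} \<longrightarrow> conn ends T1 p q"
    using extend_acyclic[OF finite_subset[OF DE fE] acyclic_empty[of ends]] by blast
  have cT1: "conn ends T1 w2 w1"
  proof -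
    obtain vs es where "walk ends D vs es" "hd vs = w2" "last vs = w1" using cD by (auto simp: conn_def)
    then show ?thesis using conn_lift[OF _ T1(3)] by metis
  qed
  have ncv: "\<not> conn ends T1 v w1"
  proof
    assume "conn ends T1 v w1"
    then obtain vs es where "walk ends T1 vs es" "hd vs = v" "last vs = w1" by (auto simp: conn_def)
    then show False using walk_stuck[of ends T1 vs es] vD T1(2) vw1 by auto
  qed
  have A1: "acyclic_on (insert e1 T1) ends" using acyclic_insert[OF T1(1) assms(6) ncv] .
  have sub1: "insert e1 T1 \<subseteq> E - {e2}" using T1(2) DE assms(3,5) e1D by auto
  obtain T where T: "acyclic_on T ends" "insert e1 T1 \<subseteq> T" "T \<subseteq> E - {e2}"
    "\<forall>g\<in>E - {e2}. \<forall>p q. ends g = {p, q} \<longrightarrow> conn ends T p q"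
    using extend_acyclic[OF _ A1 sub1] fE by blast
  have "e1 \<in> T" using T(2) by blast
  then have cvw1: "conn ends T v w1" by (rule conn_edge[of e1 T ends v w1, OF _ assms(6)])
  have "conn ends T w2 w1" using conn_mono[OF cT1] T(2) by blast
  then have cw12: "conn ends T w1 w2" by (rule conn_sym)
  have allE: "\<forall>g\<in>E. \<forall>p q. ends g = {p, q} \<longrightarrow> conn ends T p q"
  proof (intro ballI allI impI)
    fix g p q assume g: "g \<in> E" "ends g = {p, q}"
    show "conn ends T p q"
    proof (cases "g = e2")
      case True
      have "conn ends T v w2" by (rule conn_trans[OF cvw1 cw12])
      then show ?thesis using g True assms(7) conn_sym by (metis doubleton_eq_iff)
    next
      case False
      then show ?thesis using T(4) g by blast
    qed
  qed
  have conT: "connected_on V T ends" unfolding connected_on_def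
  proof (intro conjI ballI)
    show "V \<noteq> {}" using assms(2) by auto
  next
    fix a b assume ab: "a \<in> V" "b \<in> V"
    then obtain vs es where "walk ends E vs es" "hd vs = a" "last vs = b"
      using CE ab unfolding connected_on_def by blast
    then have "conn ends T a b" using conn_lift[OF _ allE] by metis
    then obtain vs' es' where W: "walk ends T vs' es'" "hd vs' = a" "last vs' = b" by (auto simp: conn_def)
    have "set vs' \<subseteq> V" using walk_in_V[OF MG _ W(1)] T(3) W(2) ab by blast
    then show "\<exists>vs es. walk ends T vs es \<and> set vs \<subseteq> V \<and> hd vs = a \<and> last vs = b" using W by blast
  qed
  have ST: "spanning_tree V E ends T" using T conT by (auto simp: spanning_tree_def)
  have P: "\<forall>vs es. path ends T vs es \<and> hd vs = w2 \<and> last vs = v \<longrightarrow> w1 \<in> set vs"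
  proof (intro allI impI)
    fix vs es assume H: "path ends T vs es \<and> hd vs = w2 \<and> last vs = v"
    show "w1 \<in> set vs"
    proof (rule ccontr)
      assume nw: "w1 \<notin> set vs"
      have W: "walk ends T vs es" using H by (simp add: path_def)
      have "set es \<subseteq> T - {e1}"
      proof
        fix g assume g: "g \<in> set es"
        have "g \<in> T" using W g unfolding walk_def by blast
        moreover have "g \<noteq> e1" using walk_edge_ends[OF W g] nw assms(6) by auto
        ultimately show "g \<in> T - {e1}" by simp
      qed
      then have "conn ends (T - {e1}) w2 v" using walk_subset[OF W] H by (auto simp: conn_def)
      moreover have "T1 \<subseteq> T - {e1}" using T(2) e1D(1) T1(2) by auto
      then have "conn ends (T - {e1}) w2 w1" using conn_mono[OF cT1] by blast
      then have "conn ends (T - {e1}) w1 w2" by (rule conn_sym)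
      ultimately have "conn ends (T - {e1}) w1 v" using conn_trans by metis
      then have "conn ends (T - {e1}) v w1" by (rule conn_sym)
      then show False using acyclic_imp[OF T(1) _ assms(6)] T(2) by blast
    qed
  qed
  show ?thesis using ST T(2,3) P by blast
qed

end
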